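(* Let $F = x_0^a(x_1^b+\cdots+x_n^b)\in k[x_0,\ldots,x_n]$ with $a\ge1$, $a+1 \leq b$ and $n \geq3$. If $\mathbb X\subset\mathbb{P}^n$ is a finite set of distinct points apolar to $F$, then $|\mathbb X \setminus \{X_i=0\}| \geq b$ for all $i=1,\ldots,n$.
   Context: $k$ is algebraically closed of characteristic zero, $T=k[X_0,\ldots,X_n]$ acts on $S=k[x_0,\ldots,x_n]$ by differentiation ($X_i\circ F=\partial F/\partial x_i$), and $F^\perp=\{g\in T:g\circ F=0\}$. A finite set $\mathbb{X}$ of points of $\mathbb{P}^n$ (with coordinates $X_0,\ldots,X_n$) is apolar to $F$ if its homogeneous ideal $I_{\mathbb{X}}\subseteq T$ satisfies $I_{\mathbb{X}}\subseteq F^\perp$. $\{X_i=0\}$ denotes the coordinate hyperplane. *)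

theory Defs
  imports "HOL-Computational_Algebra.Polynomial"
begin

text \<open>Multivariate polynomials in the variables with indices 0..n, represented
  explicitly as coefficient functions on exponent vectors (monomials)
  \<open>nat \<Rightarrow> nat\<close>, with finite support and no exponents beyond index n.
  The same representation is used for S = k[x_0..x_n] and T = k[X_0..X_n].\<close>

type_synonym monom = "nat \<Rightarrow> nat"
type_synonym 'a mpoly = "monom \<Rightarrow> 'a"

definition supp :: "'a::zero mpoly \<Rightarrow> monom set" where
  "supp g = {\<alpha>. g \<alpha> \<noteq> 0}"

definition polys :: "nat \<Rightarrow> 'a::zero mpoly set" where
  "polys n = {g. finite (supp g) \<and> (\<forall>\<alpha>\<in>supp g. \<forall>i>n. \<alpha> i = 0)}"

definition mdeg :: "nat \<Rightarrow> monom \<Rightarrow> nat" where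
  "mdeg n \<alpha> = (\<Sum>i\<le>n. \<alpha> i)"

definition hcomp :: "nat \<Rightarrow> nat \<Rightarrow> 'a::zero mpoly \<Rightarrow> 'a mpoly" where
  "hcomp n d g = (\<lambda>\<alpha>. if mdeg n \<alpha> = d then g \<alpha> else 0)"

definition eval :: "nat \<Rightarrow> 'a::comm_semiring_1 mpoly \<Rightarrow> (nat \<Rightarrow> 'a) \<Rightarrow> 'a" where
  "eval n g p = (\<Sum>\<alpha>\<in>supp g. g \<alpha> * (\<Prod>i\<le>n. p i ^ \<alpha> i))"

text \<open>Apolarity action (differentiation) g \<circ> F, X_i acting as \<partial>/\<partial>x_i:
  X^\<alpha> \<circ> x^(\<alpha>+\<gamma>) = (\<Prod>i (\<alpha>_i+\<gamma>_i)!/\<gamma>_i!) x^\<gamma>, extended bilinearly.\<close>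
definition act :: "nat \<Rightarrow> 'a::comm_semiring_1 mpoly \<Rightarrow> 'a mpoly \<Rightarrow> 'a mpoly" where
  "act n g F = (\<lambda>\<gamma>. \<Sum>\<alpha>\<in>supp g. g \<alpha> * F (\<lambda>i. \<alpha> i + \<gamma> i) *
      of_nat (\<Prod>i\<le>n. fact (\<alpha> i + \<gamma> i) div fact (\<gamma> i)))"

definition perp :: "nat \<Rightarrow> 'a::comm_semiring_1 mpoly \<Rightarrow> 'a mpoly set" where
  "perp n F = {g \<in> polys n. act n g F = (\<lambda>_. 0)}"

text \<open>Points of P^n are given by representatives p (coordinates p 0 .. p n, p i = 0
  for i > n, p nonzero).\<close>
definition proj_rep :: "nat \<Rightarrow> (nat \<Rightarrow> 'a::zero) \<Rightarrow> bool" where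
  "proj_rep n p \<longleftrightarrow> (\<exists>i\<le>n. p i \<noteq> 0) \<and> (\<forall>i>n. p i = 0)"

definition distinct_proj_points :: "nat \<Rightarrow> (nat \<Rightarrow> 'a::field) set \<Rightarrow> bool" where
  "distinct_proj_points n X \<longleftrightarrow> finite X \<and> (\<forall>p\<in>X. proj_rep n p) \<and>
     (\<forall>p\<in>X. \<forall>q\<in>X. p \<noteq> q \<longrightarrow> \<not> (\<exists>c. q = (\<lambda>i. c * p i)))"

definition ideal_of_points :: "nat \<Rightarrow> (nat \<Rightarrow> 'a::field) set \<Rightarrow> 'a mpoly set" where
  "ideal_of_points n X = {g \<in> polys n. \<forall>d. \<forall>p\<in>X. eval n (hcomp n d g) p = 0}"

definition apolar :: "nat \<Rightarrow> (nat \<Rightarrow> 'a::field) set \<Rightarrow> 'a mpoly \<Rightarrow> bool" where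
  "apolar n X F \<longleftrightarrow> ideal_of_points n X \<subseteq> perp n F"

definition Fform :: "nat \<Rightarrow> nat \<Rightarrow> nat \<Rightarrow> 'a::zero_neq_one mpoly" where
  "Fform n a b = (\<lambda>\<alpha>. if \<exists>i\<in>{1..n}. \<alpha> = (\<lambda>j. if j = 0 then a else if j = i then b else 0)
                      then 1 else 0)"

end

theory Submission
  imports Defs
begin

definition upd :: "monom \<Rightarrow> nat \<Rightarrow> monom" where "upd \<beta> j = \<beta>(j := Suc (\<beta> j))"
definition dn :: "monom \<Rightarrow> nat \<Rightarrow> monom" where "dn \<alpha> j = \<alpha>(j := \<alpha> j - 1)"
definition mulL :: "nat \<Rightarrow> (nat \<Rightarrow> 'a::comm_ring_1) \<Rightarrow> 'a mpoly \<Rightarrow> 'a mpoly" where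
  "mulL n c h = (\<lambda>\<alpha>. \<Sum>j\<le>n. if 0 < \<alpha> j then c j * h (dn \<alpha> j) else 0)"
definition tm :: "nat \<Rightarrow> nat \<Rightarrow> monom" where
  "tm i k = (\<lambda>j. if j = 0 then 1 else if j = i then k else 0)"

lemma upd_dn: "0 < \<alpha> j \<Longrightarrow> upd (dn \<alpha> j) j = \<alpha>"
  by (auto simp: upd_def dn_def)

lemma dn_upd: "dn (upd \<beta> j) j = \<beta>"
  by (auto simp: upd_def dn_def)

lemma upd_apply: "upd \<beta> j k = \<beta> k + (if k = j then 1 else 0)"
  by (auto simp: upd_def)

lemma eval_superset:
  assumes "finite A" "supp g \<subseteq> A"
  shows "eval n g p = (\<Sum>\<alpha>\<in>A. g \<alpha> * (\<Prod>i\<le>n. p i ^ \<alpha> i))"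
  unfolding eval_def
  by (rule sum.mono_neutral_left) (use assms in \<open>auto simp: supp_def\<close>)

lemma supp_mulL:
  "supp (mulL n c h) \<subseteq> (\<Union>j\<in>{..n}. (\<lambda>\<beta>. upd \<beta> j) ` supp h)"
proof
  fix \<alpha> assume "\<alpha> \<in> supp (mulL n c h)"
  then have "(\<Sum>j\<le>n. if 0 < \<alpha> j then c j * h (dn \<alpha> j) else 0) \<noteq> 0"
    by (simp add: supp_def mulL_def)
  then obtain j where j: "j \<in> {..n}" "(if 0 < \<alpha> j then c j * h (dn \<alpha> j) else 0) \<noteq> 0"
    by (rule sum.not_neutral_contains_not_neutral)
  then have pos: "0 < \<alpha> j" and hz: "h (dn \<alpha> j) \<noteq> 0" by (auto split: if_splits)
  have "dn \<alpha> j \<in> supp h" using hz by (simp add: supp_def)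
  then have "upd (dn \<alpha> j) j \<in> (\<lambda>\<beta>. upd \<beta> j) ` supp h" by (rule imageI)
  then have "\<alpha> \<in> (\<lambda>\<beta>. upd \<beta> j) ` supp h" using upd_dn[of \<alpha> j, OF pos] by simp
  then show "\<alpha> \<in> (\<Union>j\<in>{..n}. (\<lambda>\<beta>. upd \<beta> j) ` supp h)"
    using j(1) by blast
qed

lemma mono_upd:
  assumes "j \<le> n"
  shows "(\<Prod>i\<le>n. p i ^ upd \<beta> j i) = p j * (\<Prod>i\<le>n. (p i::'a::comm_semiring_1) ^ \<beta> i)"
proof -
  have "(\<Prod>i\<le>n. p i ^ upd \<beta> j i) = (\<Prod>i\<le>n. p i ^ \<beta> i * (if i = j then p i else 1))"
    by (rule prod.cong) (auto simp: upd_apply mult.commute)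
  also have "\<dots> = (\<Prod>i\<le>n. p i ^ \<beta> i) * (\<Prod>i\<le>n. (if i = j then p i else 1))"
    by (rule prod.distrib)
  also have "\<dots> = (\<Prod>i\<le>n. p i ^ \<beta> i) * p j" using assms by (simp add: prod.delta)
  finally show ?thesis by (simp add: mult.commute)
qed

lemma eval_mulL:
  fixes h :: "'a::comm_ring_1 mpoly"
  assumes fin: "finite (supp h)"
  shows "eval n (mulL n c h) p = (\<Sum>j\<le>n. c j * p j) * eval n h p"
proof -
  define A where "A = (\<Union>j\<in>{..n}. (\<lambda>\<beta>. upd \<beta> j) ` supp h)"
  have finA: "finite A" using fin by (simp add: A_def)
  define mo where "mo = (\<lambda>\<alpha>. \<Prod>i\<le>n. p i ^ \<alpha> i)"
  have "eval n (mulL n c h) p = (\<Sum>\<alpha>\<in>A. mulL n c h \<alpha> * mo \<alpha>)"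
    unfolding mo_def by (rule eval_superset[OF finA]) (use supp_mulL[of n c h] in \<open>simp add: A_def\<close>)
  also have "\<dots> = (\<Sum>\<alpha>\<in>A. \<Sum>j\<le>n. (if 0 < \<alpha> j then c j * h (dn \<alpha> j) else 0) * mo \<alpha>)"
    by (simp add: mulL_def sum_distrib_right)
  also have "\<dots> = (\<Sum>j\<le>n. \<Sum>\<alpha>\<in>A. (if 0 < \<alpha> j then c j * h (dn \<alpha> j) else 0) * mo \<alpha>)"
    by (rule sum.swap)
  also have "\<dots> = (\<Sum>j\<le>n. c j * p j * (\<Sum>\<beta>\<in>supp h. h \<beta> * mo \<beta>))"
  proof (rule sum.cong[OF refl])
    fix j assume j: "j \<in> {..n}"
    define f where "f = (\<lambda>\<alpha>. (if 0 < \<alpha> j then c j * h (dn \<alpha> j) else 0) * mo \<alpha>)"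
    have inj: "inj_on (\<lambda>\<beta>. upd \<beta> j) (supp h)"
      by (metis dn_upd inj_onI)
    have sub: "(\<lambda>\<beta>. upd \<beta> j) ` supp h \<subseteq> A" using j by (auto simp: A_def)
    have "(\<Sum>\<alpha>\<in>A. f \<alpha>) = (\<Sum>\<alpha>\<in>(\<lambda>\<beta>. upd \<beta> j) ` supp h. f \<alpha>)"
    proof (rule sum.mono_neutral_right[OF finA sub])
      show "\<forall>\<alpha>\<in>A - (\<lambda>\<beta>. upd \<beta> j) ` supp h. f \<alpha> = 0"
      proof
        fix \<alpha> assume a: "\<alpha> \<in> A - (\<lambda>\<beta>. upd \<beta> j) ` supp h"
        show "f \<alpha> = 0"
        proof (cases "0 < \<alpha> j")
          case True
          have "h (dn \<alpha> j) = 0"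
            proof (rule ccontr)
            assume "h (dn \<alpha> j) \<noteq> 0"
            then have "dn \<alpha> j \<in> supp h" by (simp add: supp_def)
            then have "upd (dn \<alpha> j) j \<in> (\<lambda>\<beta>. upd \<beta> j) ` supp h" by blast
            then show False using a upd_dn[of \<alpha> j, OF True] by simp
          qed
          then show ?thesis by (simp add: f_def)
        qed (simp add: f_def)
      qed
    qed
    also have "\<dots> = (\<Sum>\<beta>\<in>supp h. f (upd \<beta> j))"
      by (rule sum.reindex[OF inj, unfolded comp_def])
    also have "\<dots> = (\<Sum>\<beta>\<in>supp h. c j * p j * (h \<beta> * mo \<beta>))"
      proof (rule sum.cong[OF refl])
      fix \<beta> assume "\<beta> \<in> supp h"
      have "0 < upd \<beta> j j" by (simp add: upd_apply)
      moreover have "mo (upd \<beta> j) = p j * mo \<beta>" using j by (simp add: mo_def mono_upd)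
      ultimately show "f (upd \<beta> j) = c j * p j * (h \<beta> * mo \<beta>)"
        by (simp add: f_def dn_upd algebra_simps)
    qed
    finally show "(\<Sum>\<alpha>\<in>A. (if 0 < \<alpha> j then c j * h (dn \<alpha> j) else 0) * mo \<alpha>) =
        c j * p j * (\<Sum>\<beta>\<in>supp h. h \<beta> * mo \<beta>)"
      by (simp add: f_def sum_distrib_left)
  qed
  also have "\<dots> = (\<Sum>j\<le>n. c j * p j) * eval n h p"
    by (simp add: eval_def mo_def sum_distrib_right)
  finally show ?thesis .
qed


lemma mulL_props:
  fixes h :: "'a::comm_ring_1 mpoly"
  assumes "h \<in> polys n" "\<forall>\<alpha>\<in>supp h. mdeg n \<alpha> = D \<and> 1 \<le> \<alpha> 0 \<and> 1 \<le> \<alpha> i"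
  shows "mulL n c h \<in> polys n"
    and "\<forall>\<alpha>\<in>supp (mulL n c h). mdeg n \<alpha> = Suc D \<and> 1 \<le> \<alpha> 0 \<and> 1 \<le> \<alpha> i"
proof -
  have fin: "finite (supp h)" using assms(1) by (simp add: polys_def)
  have key: "\<exists>j\<le>n. \<exists>\<beta>\<in>supp h. \<alpha> = upd \<beta> j" if "\<alpha> \<in> supp (mulL n c h)" for \<alpha>
    using supp_mulL[of n c h] that by blast
  have "finite (supp (mulL n c h))"
    by (rule finite_subset[OF supp_mulL]) (use fin in simp)
  moreover have "\<forall>\<alpha>\<in>supp (mulL n c h). \<forall>k>n. \<alpha> k = 0"
  proof (intro ballI allI impI)
    fix \<alpha> k assume "\<alpha> \<in> supp (mulL n c h)" "n < k"
    then obtain j \<beta> where "j \<le> n" "\<beta> \<in> supp h" "\<alpha> = upd \<beta> j" using key by blast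
    then show "\<alpha> k = 0" using assms(1) \<open>n < k\<close> by (auto simp: polys_def upd_apply)
  qed
  ultimately show "mulL n c h \<in> polys n" by (simp add: polys_def)
  show "\<forall>\<alpha>\<in>supp (mulL n c h). mdeg n \<alpha> = Suc D \<and> 1 \<le> \<alpha> 0 \<and> 1 \<le> \<alpha> i"
  proof
    fix \<alpha> assume "\<alpha> \<in> supp (mulL n c h)"
    then obtain j \<beta> where j: "j \<le> n" "\<beta> \<in> supp h" "\<alpha> = upd \<beta> j" using key by blast
    have "mdeg n \<alpha> = (\<Sum>k\<le>n. \<beta> k + (if k = j then 1 else 0))"
      by (simp add: mdeg_def j(3) upd_apply)
    also have "\<dots> = mdeg n \<beta> + 1" using j(1) by (simp add: sum.distrib mdeg_def)
    finally show "mdeg n \<alpha> = Suc D \<and> 1 \<le> \<alpha> 0 \<and> 1 \<le> \<alpha> i"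
      using assms(2) j by (auto simp: upd_apply)
  qed
qed

lemma tm_dn_i: "0 < i \<Longrightarrow> dn (tm i (Suc k)) i = tm i k"
  by (auto simp: dn_def tm_def)

lemma mulL_tm:
  fixes h :: "'a::comm_ring_1 mpoly"
  assumes "0 < i" "i \<le> n" "\<forall>\<alpha>\<in>supp h. 1 \<le> \<alpha> 0"
  shows "mulL n c h (tm i (Suc k)) = c i * h (tm i k)"
proof -
  have "\<And>j. (if 0 < tm i (Suc k) j then c j * h (dn (tm i (Suc k)) j) else 0)
        = (if j = i then c i * h (tm i k) else 0)"
  proof -
    fix j
    show "(if 0 < tm i (Suc k) j then c j * h (dn (tm i (Suc k)) j) else 0)
        = (if j = i then c i * h (tm i k) else 0)"
    proof (cases "j = 0")
      case True
      have "dn (tm i (Suc k)) j \<notin> supp h" using assms(3) True by (auto simp: dn_def tm_def)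
      then show ?thesis using True assms(1) by (simp add: supp_def)
    next
      case False
      then show ?thesis using assms(1) by (auto simp: tm_def tm_dn_i[OF assms(1), unfolded tm_def])
    qed
  qed
  then show ?thesis unfolding mulL_def using assms(2) by simp
qed

lemma mdeg_tm: "0 < i \<Longrightarrow> i \<le> n \<Longrightarrow> mdeg n (tm i k) = Suc k"
proof -
  assume a: "0 < i" "i \<le> n"
  have "mdeg n (tm i k) = (\<Sum>j\<le>n. (if j = 0 then 1 else 0) + (if j = i then k else 0))"
    unfolding mdeg_def by (rule sum.cong) (use a in \<open>auto simp: tm_def\<close>)
  also have "\<dots> = Suc k" using a by (simp add: sum.distrib)
  finally show ?thesis .
qed

lemma build:
  fixes i n :: nat and P :: "(nat \<Rightarrow> 'a::field) set"
  assumes "0 < i" "i \<le> n" "finite P" "\<forall>q\<in>P. \<exists>l\<le>n. l \<noteq> i \<and> q l \<noteq> 0"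
  shows "\<exists>g::'a mpoly. g \<in> polys n \<and> (\<forall>\<alpha>\<in>supp g. mdeg n \<alpha> = card P + 2 \<and> 1 \<le> \<alpha> 0 \<and> 1 \<le> \<alpha> i)
     \<and> g (tm i (card P + 1)) \<noteq> 0 \<and> (\<forall>p. p 0 * p i = 0 \<or> p \<in> P \<longrightarrow> eval n g p = 0)"
  using assms(3,4)
proof (induction P rule: finite_induct)
  case empty
  define g :: "'a mpoly" where "g = (\<lambda>\<alpha>. if \<alpha> = tm i 1 then 1 else 0)"
  have supp: "supp g = {tm i 1}" by (auto simp: g_def supp_def)
  have "g \<in> polys n" using assms(1,2) by (auto simp: polys_def supp tm_def)
  moreover have "\<forall>\<alpha>\<in>supp g. mdeg n \<alpha> = card {} + 2 \<and> 1 \<le> \<alpha> 0 \<and> 1 \<le> \<alpha> i"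
    using assms(1,2) by (simp add: supp mdeg_tm) (simp add: tm_def)
  moreover have "g (tm i (card {} + 1)) \<noteq> 0" by (simp add: g_def)
  moreover have "eval n g p = p 0 * p i" for p :: "nat \<Rightarrow> 'a"
  proof -
    have "eval n g p = (\<Prod>j\<le>n. p j ^ tm i 1 j)" unfolding eval_def supp by (simp add: g_def)
    also have "\<dots> = (\<Prod>j\<le>n. (if j = 0 then p j else 1) * (if j = i then p j else 1))"
      by (rule prod.cong) (use assms(1) in \<open>auto simp: tm_def\<close>)
    also have "\<dots> = p 0 * p i" using assms(2) by (simp add: prod.distrib prod.delta)
    finally show ?thesis .
  qed
  ultimately show ?case by auto
next
  case (insert q P)
  obtain g where g: "g \<in> polys n" "\<forall>\<alpha>\<in>supp g. mdeg n \<alpha> = card P + 2 \<and> 1 \<le> \<alpha> 0 \<and> 1 \<le> \<alpha> i"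
     "g (tm i (card P + 1)) \<noteq> 0" "\<forall>p. p 0 * p i = 0 \<or> p \<in> P \<longrightarrow> eval n g p = 0"
    using insert by auto
  obtain l where l: "l \<le> n" "l \<noteq> i" "q l \<noteq> 0" using insert.prems by auto
  define c where "c = (\<lambda>j. (if j = l then q i else 0) - (if j = i then q l else 0))"
  have cq: "(\<Sum>j\<le>n. c j * q j) = 0"
  proof -
    have "(\<Sum>j\<le>n. c j * q j) = (\<Sum>j\<le>n. (if j = l then q i * q l else 0) - (if j = i then q l * q i else 0))"
      by (rule sum.cong) (auto simp: c_def algebra_simps)
    also have "\<dots> = (\<Sum>j\<le>n. (if j = l then q i * q l else 0)) - (\<Sum>j\<le>n. (if j = i then q l * q i else 0))"
      by (rule sum_subtractf)
    also have "\<dots> = 0" using l assms(2) by (simp add: mult.commute)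
    finally show ?thesis .
  qed
  have ci: "c i = - q l" using l by (simp add: c_def)
  define g' where "g' = mulL n c g"
  have fin: "finite (supp g)" using g(1) by (simp add: polys_def)
  have "g' \<in> polys n" using mulL_props(1)[OF g(1,2)] by (simp add: g'_def)
  moreover have "\<forall>\<alpha>\<in>supp g'. mdeg n \<alpha> = card (insert q P) + 2 \<and> 1 \<le> \<alpha> 0 \<and> 1 \<le> \<alpha> i"
    using mulL_props(2)[OF g(1,2)] insert.hyps by (simp add: g'_def)
  moreover have "g' (tm i (card (insert q P) + 1)) \<noteq> 0"
  proof -
    have "g' (tm i (card (insert q P) + 1)) = c i * g (tm i (card P + 1))"
      using mulL_tm[OF assms(1,2), of g c "card P + 1"] g(2) insert.hyps by (simp add: g'_def)
    then show ?thesis using ci l g(3) by simp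
  qed
  moreover have "\<forall>p. p 0 * p i = 0 \<or> p \<in> insert q P \<longrightarrow> eval n g' p = 0"
    using g(4) cq by (auto simp: g'_def eval_mulL[OF fin])
  ultimately show ?case by blast
qed


theorem lemma7p1:
  fixes X :: "(nat \<Rightarrow> 'a::{alg_closed_field, field_char_0}) set"
    and n a b :: nat
  assumes "a \<ge> 1" and "a + 1 \<le> b" and "n \<ge> 3"
    and "distinct_proj_points n X"
    and "apolar n X (Fform n a b)"
  shows "\<forall>i\<in>{1..n}. card {p \<in> X. p i \<noteq> 0} \<ge> b"
proof
  fix i assume i: "i \<in> {1..n}"
  then have i0: "0 < i" and iN: "i \<le> n" by auto
  have finX: "finite X" using assms(4) by (simp add: distinct_proj_points_def)
  show "card {p \<in> X. p i \<noteq> 0} \<ge> b"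
  proof (rule ccontr)
    assume "\<not> ?thesis"
    then have lt: "card {p \<in> X. p i \<noteq> 0} < b" by simp
    define Z' where "Z' = {p \<in> X. p i \<noteq> 0 \<and> (\<exists>l\<le>n. l \<noteq> i \<and> p l \<noteq> 0)}"
    have finZ': "finite Z'" using finX by (simp add: Z'_def)
    have "card Z' \<le> card {p \<in> X. p i \<noteq> 0}"
      by (rule card_mono) (use finX in \<open>auto simp: Z'_def\<close>)
    with lt have Kb: "card Z' + 1 \<le> b" by simp
    define K where "K = card Z' + 1"
    obtain g :: "'a mpoly" where g: "g \<in> polys n"
      "\<forall>\<alpha>\<in>supp g. mdeg n \<alpha> = card Z' + 2 \<and> 1 \<le> \<alpha> 0 \<and> 1 \<le> \<alpha> i"
      "g (tm i K) \<noteq> 0" "\<forall>p. p 0 * p i = 0 \<or> p \<in> Z' \<longrightarrow> eval n g p = 0"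
      using build[OF i0 iN finZ'] unfolding K_def by (auto simp: Z'_def)
    have vanish: "eval n g p = 0" if "p \<in> X" for p
    proof (cases "p \<in> Z'")
      case False
      then have "p i = 0 \<or> p 0 = 0" using that i0 by (auto simp: Z'_def)
      then show ?thesis using g(4) by auto
    qed (use g(4) in auto)
    have "g \<in> ideal_of_points n X"
      unfolding ideal_of_points_def
    proof (intro CollectI conjI allI ballI g(1))
      fix d p assume p: "p \<in> X"
      show "eval n (hcomp n d g) p = 0"
      proof (cases "d = card Z' + 2")
        case True
        then have "hcomp n d g = g" using g(2) by (auto simp: hcomp_def supp_def fun_eq_iff)
        then show ?thesis using vanish p by simp
      next
        case False
        then have "hcomp n d g = (\<lambda>_. 0)" using g(2) by (auto simp: hcomp_def supp_def fun_eq_iff)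
        then show ?thesis by (simp add: eval_def supp_def)
      qed
    qed
    then have act0: "act n g (Fform n a b) = (\<lambda>_. 0)"
      using assms(5) by (auto simp: apolar_def perp_def)
    define \<gamma> :: monom where "\<gamma> = (\<lambda>j. if j = 0 then a - 1 else if j = i then b - K else 0)"
    define E :: "nat \<Rightarrow> monom" where "E = (\<lambda>l j. if j = 0 then a else if j = l then b else 0)"
    have FE: "Fform n a b = (\<lambda>\<alpha>. if \<exists>l\<in>{1..n}. \<alpha> = E l then (1::'a) else 0)"
      by (simp add: Fform_def E_def)
    have KB: "K \<le> b" using Kb K_def by simp
    have tmE: "(\<lambda>j. tm i K j + \<gamma> j) = E i"
      using assms(1) KB i0 by (auto simp: tm_def \<gamma>_def E_def fun_eq_iff)
    have others: "Fform n a b (\<lambda>j. \<alpha> j + \<gamma> j) = (0::'a)" if "\<alpha> \<in> supp g - {tm i K}" for \<alpha>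
    proof (rule ccontr)
      assume "Fform n a b (\<lambda>j. \<alpha> j + \<gamma> j) \<noteq> (0::'a)"
      then have "\<exists>l\<in>{1..n}. (\<lambda>j. \<alpha> j + \<gamma> j) = E l" unfolding FE by (simp split: if_splits)
      then obtain l where l: "l \<in> {1..n}" "(\<lambda>j. \<alpha> j + \<gamma> j) = E l" by blast
      have ai: "1 \<le> \<alpha> i" "1 \<le> \<alpha> 0" using g(2) that by auto
      have eq: "\<alpha> j + \<gamma> j = E l j" for j using l(2) by (metis)
      have "l = i"
      proof (rule ccontr)
        assume "l \<noteq> i"
        then have "\<alpha> i + \<gamma> i = 0" using eq[of i] i0 by (simp add: E_def)
        then show False using ai by simp
      qed
      have "\<alpha> = tm i K"
      proof
        fix j show "\<alpha> j = tm i K j"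
          using eq[of j] \<open>l = i\<close> assms(1) KB i0 ai by (auto simp: tm_def \<gamma>_def E_def split: if_splits)
      qed
      then show False using that by simp
    qed
    define N where "N = (\<Prod>j\<le>n. fact (tm i K j + \<gamma> j) div fact (\<gamma> j) :: nat)"
    have N0: "N \<noteq> 0"
    proof -
      have "fact (tm i K j + \<gamma> j) div fact (\<gamma> j) \<noteq> (0::nat)" for j
      proof -
        have "fact (\<gamma> j) dvd (fact (tm i K j + \<gamma> j) :: nat)" by (rule fact_dvd) simp
        then show ?thesis by (metis dvd_div_eq_0_iff fact_nonzero)
      qed
      then show ?thesis unfolding N_def by (simp add: prod_zero_iff)
    qed
    have inS: "tm i K \<in> supp g" using g(3) by (simp add: supp_def)
    have finS: "finite (supp g)" using g(1) by (simp add: polys_def)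
    have "act n g (Fform n a b) \<gamma> = g (tm i K) * Fform n a b (\<lambda>j. tm i K j + \<gamma> j) * of_nat N"
      unfolding act_def N_def
      by (subst sum.remove[OF finS inS]) (simp add: others)
    also have "Fform n a b (\<lambda>j. tm i K j + \<gamma> j) = (1::'a)"
      unfolding tmE using i by (auto simp: FE)
    finally have "act n g (Fform n a b) \<gamma> \<noteq> 0" using g(3) N0 by simp
    then show False using act0 by simp
  qed
qed

end
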